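(* Let $\Phi:(\mathcal{S},g)\to(\mathcal{M},\bar g)$ be an isometric immersion of an $n$-dimensional orientable Riemannian manifold into a semi-Riemannian manifold with co-dimension $k$. Assume that $\dim\mathrm{Im}\,\widetilde h_p$ is constant on $\mathcal{S}$ (equivalently, $\dim\mathscr{U}_p$ is constant on $\mathcal{S}$). Then the shear space $\mathrm{Im}\,\widetilde h$ and the umbilical space $\mathscr{U}$ of $\mathcal{S}$ are well defined, and $$\mathscr{U}=(\mathrm{Im}\,\widetilde h)^\perp,\qquad k-\dim\mathscr{U}=\dim\mathrm{Im}\,\widetilde h.$$
   Context: $g=\Phi^\star\bar g$ is positive definite. $h$ is the second fundamental form, $A_\xi$ the shape operator ($g(A_\xi X,Y)=\bar g(h(X,Y),\xi)$), $H=\frac1n\mathrm{tr}_gh$ the mean curvature vector, and $\widetilde h(X,Y)=h(X,Y)-g(X,Y)H$ the total shear tensor. The shear space at $p$ is $\mathrm{Im}\,\widetilde h_p=\mathrm{span}\{\widetilde h(v,w):v,w\in T_p\mathcal{S}\}$ and the umbilical space at $p$ is $\mathscr{U}_p=\{\xi_p\in T_p\mathcal{S}^\perp:A_{\xi_p}\text{ proportional to the identity}\}$. When these have constant dimension, the shear space of $\mathcal{S}$ is $\mathrm{Im}\,\widetilde h=\bigcup_p\mathrm{Im}\,\widetilde h_p$ (a module over functions on $\mathcal{S}$ of dimension $\dim\mathrm{Im}\,\widetilde h_p$), and the umbilical space of $\mathcal{S}$ is $\mathscr{U}=\{\xi\text{ normal vector field}:A_\xi\text{ proportional to identity}\}$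 (a module of dimension $\dim\mathscr{U}_p$). $(\mathrm{Im}\,\widetilde h)^\perp$ denotes the normal vector fields $\bar g$-orthogonal at each point to $\mathrm{Im}\,\widetilde h_p$. *)

theory Defs
  imports "HOL-Analysis.Analysis"
begin

text \<open>Pointwise (algebraic) model of an isometric immersion: at each point p of S we have
 the tangent space real^'n with induced metric g p, the normal space real^'k with the
 restriction gb p of the ambient semi-Riemannian metric, and the second fundamental
 form h p : T_p x T_p -> N_p.\<close>

definition pos_def_form :: "('a::real_vector \<Rightarrow> 'a \<Rightarrow> real) \<Rightarrow> bool" where
  "pos_def_form B \<longleftrightarrow> bilinear B \<and> (\<forall>x y. B x y = B y x) \<and> (\<forall>x. x \<noteq> 0 \<longrightarrow> B x x > 0)"

definition nondeg_sym_form :: "('a::real_vector \<Rightarrow> 'a \<Rightarrow> real) \<Rightarrow> bool" where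
  "nondeg_sym_form B \<longleftrightarrow> bilinear B \<and> (\<forall>x y. B x y = B y x) \<and>
     (\<forall>x. (\<forall>y. B x y = 0) \<longrightarrow> x = 0)"

definition sym_bilinear_map :: "('a::real_vector \<Rightarrow> 'a \<Rightarrow> 'b::real_vector) \<Rightarrow> bool" where
  "sym_bilinear_map h \<longleftrightarrow> bilinear h \<and> (\<forall>x y. h x y = h y x)"

definition gram :: "(real^'n \<Rightarrow> real^'n \<Rightarrow> real) \<Rightarrow> real^'n^'n" where
  "gram g = (\<chi> i j. g (axis i 1) (axis j 1))"

definition trace_g :: "(real^'n \<Rightarrow> real^'n \<Rightarrow> real) \<Rightarrow> (real^'n \<Rightarrow> real^'n \<Rightarrow> 'b::real_vector) \<Rightarrow> 'b" where
  "trace_g g h = (\<Sum>i\<in>UNIV. \<Sum>j\<in>UNIV. (matrix_inv (gram g) $ i $ j) *\<^sub>R h (axis i 1) (axis j 1))"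

definition mean_curv :: "(real^'n \<Rightarrow> real^'n \<Rightarrow> real) \<Rightarrow> (real^'n \<Rightarrow> real^'n \<Rightarrow> 'b::real_vector) \<Rightarrow> 'b" where
  "mean_curv g h = (1 / real CARD('n)) *\<^sub>R trace_g g h"

definition shear :: "(real^'n \<Rightarrow> real^'n \<Rightarrow> real) \<Rightarrow> (real^'n \<Rightarrow> real^'n \<Rightarrow> 'b::real_vector)
    \<Rightarrow> real^'n \<Rightarrow> real^'n \<Rightarrow> 'b" where
  "shear g h X Y = h X Y - g X Y *\<^sub>R mean_curv g h"

definition shape_op :: "(real^'n \<Rightarrow> real^'n \<Rightarrow> real) \<Rightarrow> ('b \<Rightarrow> 'b \<Rightarrow> real)
    \<Rightarrow> (real^'n \<Rightarrow> real^'n \<Rightarrow> 'b) \<Rightarrow> 'b \<Rightarrow> real^'n \<Rightarrow> real^'n" where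
  "shape_op g gb h \<xi> = (THE A. \<forall>X Y. g (A X) Y = gb (h X Y) \<xi>)"

definition shear_space :: "(real^'n \<Rightarrow> real^'n \<Rightarrow> real) \<Rightarrow> (real^'n \<Rightarrow> real^'n \<Rightarrow> 'b::real_vector) \<Rightarrow> 'b set" where
  "shear_space g h = span {shear g h v w | v w. True}"

definition umbilical_space :: "(real^'n \<Rightarrow> real^'n \<Rightarrow> real) \<Rightarrow> ('b \<Rightarrow> 'b \<Rightarrow> real)
    \<Rightarrow> (real^'n \<Rightarrow> real^'n \<Rightarrow> 'b) \<Rightarrow> 'b set" where
  "umbilical_space g gb h = {\<xi>. \<exists>c::real. shape_op g gb h \<xi> = (\<lambda>X. c *\<^sub>R X)}"

definition orth_compl :: "('b \<Rightarrow> 'b \<Rightarrow> real) \<Rightarrow> 'b set \<Rightarrow> 'b set" where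
  "orth_compl gb W = {\<xi>. \<forall>\<eta>\<in>W. gb \<xi> \<eta> = 0}"

text \<open>Module-level objects: normal vector fields over S.\<close>
definition umbilical_fields :: "'p set \<Rightarrow> ('p \<Rightarrow> real^'n \<Rightarrow> real^'n \<Rightarrow> real) \<Rightarrow> ('p \<Rightarrow> 'b \<Rightarrow> 'b \<Rightarrow> real)
    \<Rightarrow> ('p \<Rightarrow> real^'n \<Rightarrow> real^'n \<Rightarrow> 'b) \<Rightarrow> ('p \<Rightarrow> 'b) set" where
  "umbilical_fields S g gb h = {\<xi>. \<forall>p\<in>S. \<xi> p \<in> umbilical_space (g p) (gb p) (h p)}"

definition shear_perp_fields :: "'p set \<Rightarrow> ('p \<Rightarrow> real^'n \<Rightarrow> real^'n \<Rightarrow> real) \<Rightarrow> ('p \<Rightarrow> 'b \<Rightarrow> 'b \<Rightarrow> real)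
    \<Rightarrow> ('p \<Rightarrow> real^'n \<Rightarrow> real^'n \<Rightarrow> 'b::real_vector) \<Rightarrow> ('p \<Rightarrow> 'b) set" where
  "shear_perp_fields S g gb h = {\<xi>. \<forall>p\<in>S. \<xi> p \<in> orth_compl (gb p) (shear_space (g p) (h p))}"

end

theory Submission
  imports Defs
begin

lemma riesz1:
  fixes l :: "real^'n \<Rightarrow> real"
  assumes "linear l"
  shows "l x = x \<bullet> (\<chi> i. l (axis i 1))"
proof -
  have x: "x = (\<Sum>i\<in>UNIV. x$i *\<^sub>R axis i 1)"
    using basis_expansion[of x] by (simp add: scalar_mult_eq_scaleR)
  have "l x = (\<Sum>i\<in>UNIV. x$i * l (axis i 1))"
    by (subst x) (simp add: linear_sum[OF assms] linear_scale[OF assms] o_def)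
  also have "\<dots> = x \<bullet> (\<chi> i. l (axis i 1))"
    by (simp add: inner_vec_def)
  finally show ?thesis .
qed

lemma bil_left: "bilinear B \<Longrightarrow> linear (\<lambda>x. B x y)"
  by (simp add: bilinear_def)
lemma bil_right: "bilinear B \<Longrightarrow> linear (\<lambda>y. B x y)"
  by (simp add: bilinear_def)

lemma riesz2:
  fixes B :: "real^'n \<Rightarrow> real^'n \<Rightarrow> real"
  assumes "bilinear B"
  shows "B x y = x \<bullet> (\<chi> i. B (axis i 1) y)"
  by (rule riesz1[OF bil_left[OF assms]])

lemma G_linear:
  fixes B :: "real^'n \<Rightarrow> real^'n \<Rightarrow> real"
  assumes "bilinear B"
  shows "linear (\<lambda>y. \<chi> i. B (axis i 1) y)"
  by (rule linearI) (simp_all add: vec_eq_iff bilinear_radd[OF assms] bilinear_rmul[OF assms])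

lemma G_inj:
  fixes B :: "real^'n \<Rightarrow> real^'n \<Rightarrow> real"
  assumes "nondeg_sym_form B"
  shows "inj (\<lambda>y. \<chi> i. B (axis i 1) y)"
proof -
  have bl: "bilinear B" and sy: "\<forall>x y. B x y = B y x" and nd: "\<forall>x. (\<forall>y. B x y = 0) \<longrightarrow> x = 0"
    using assms unfolding nondeg_sym_form_def by auto
  have lin: "linear (\<lambda>y. \<chi> i. B (axis i 1) y)" by (rule G_linear[OF bl])
  have z0: "\<forall>y. (\<chi> i. B (axis i 1) y) = 0 \<longrightarrow> y = 0"
  proof (intro allI impI)
    fix y
    assume z: "(\<chi> i. B (axis i 1) y) = 0"
    have "B y x = 0" for x
    proof -
      have "B x y = x \<bullet> (\<chi> i. B (axis i 1) y)" by (rule riesz2[OF bl])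
      then have "B x y = 0" using z by simp
      moreover have "B y x = B x y" using sy by blast
      ultimately show ?thesis by simp
    qed
    then show "y = 0" using nd by blast
  qed
  show ?thesis using z0 linear_injective_0[OF lin] by blast
qed

lemma pd_nondeg:
  assumes "pos_def_form B" shows "nondeg_sym_form B"
proof -
  have "bilinear B" "\<forall>x y. B x y = B y x" and p: "\<forall>x. x \<noteq> 0 \<longrightarrow> B x x > 0"
    using assms unfolding pos_def_form_def by auto
  moreover have "x = 0" if "\<forall>y. B x y = 0" for x
  proof (rule ccontr)
    assume "x \<noteq> 0" then have "B x x > 0" using p by blast
    then show False using that by simp
  qed
  ultimately show ?thesis unfolding nondeg_sym_form_def by blast
qed

lemma orth_span:
  fixes gb :: "'b::real_vector \<Rightarrow> 'b \<Rightarrow> real"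
  assumes "bilinear gb"
  shows "orth_compl gb (span T) = {\<xi>. \<forall>\<eta>\<in>T. gb \<xi> \<eta> = 0}"
proof
  show "orth_compl gb (span T) \<subseteq> {\<xi>. \<forall>\<eta>\<in>T. gb \<xi> \<eta> = 0}"
    unfolding orth_compl_def using span_base by blast
  show "{\<xi>. \<forall>\<eta>\<in>T. gb \<xi> \<eta> = 0} \<subseteq> orth_compl gb (span T)"
  proof
    fix \<xi> assume "\<xi> \<in> {\<xi>. \<forall>\<eta>\<in>T. gb \<xi> \<eta> = 0}"
    then have "T \<subseteq> {\<eta>. gb \<xi> \<eta> = 0}" by auto
    moreover have "subspace {\<eta>. gb \<xi> \<eta> = 0}"
      by (rule linear_subspace_kernel[OF bil_right[OF assms]])
    ultimately have "span T \<subseteq> {\<eta>. gb \<xi> \<eta> = 0}" by (rule span_minimal)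
    then show "\<xi> \<in> orth_compl gb (span T)" unfolding orth_compl_def by auto
  qed
qed

lemma shape_eq:
  fixes g :: "real^'n \<Rightarrow> real^'n \<Rightarrow> real"
  assumes pd: "pos_def_form g" and A: "\<forall>X Y. g (A X) Y = gb (h X Y) \<xi>"
  shows "shape_op g gb h \<xi> = A"
  unfolding shape_op_def
proof (rule the_equality)
  show "\<forall>X Y. g (A X) Y = gb (h X Y) \<xi>" by (rule A)
  fix A' assume A': "\<forall>X Y. g (A' X) Y = gb (h X Y) \<xi>"
  have bl: "bilinear g" and p: "\<forall>x. x \<noteq> 0 \<longrightarrow> g x x > 0"
    using pd unfolding pos_def_form_def by auto
  show "A' = A"
  proof
    fix X
    let ?d = "A' X - A X"
    have "g ?d ?d = g (A' X) ?d - g (A X) ?d" by (rule bilinear_lsub[OF bl])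
    also have "\<dots> = 0" using A A' by simp
    finally have "?d = 0" using p by (metis less_irrefl)
    then show "A' X = A X" by simp
  qed
qed

lemma shape_ex:
  fixes g :: "real^'n \<Rightarrow> real^'n \<Rightarrow> real" and h :: "real^'n \<Rightarrow> real^'n \<Rightarrow> 'b::real_vector"
  assumes pd: "pos_def_form g" and gbl: "bilinear gb" and hs: "sym_bilinear_map h"
  shows "\<exists>A. \<forall>X Y. g (A X) Y = gb (h X Y) \<xi>"
proof -
  have bl: "bilinear g" and sy: "\<forall>x y. g x y = g y x" using pd unfolding pos_def_form_def by auto
  define G where "G = (\<lambda>y. \<chi> i. g (axis i 1) y)"
  have Glin: "linear G" unfolding G_def by (rule G_linear[OF bl])
  have "inj G" unfolding G_def by (rule G_inj[OF pd_nondeg[OF pd]])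
  then have surj: "surj G" using Glin eucl.linear_inj_imp_surj by blast
  have "\<forall>X. \<exists>v. \<forall>Y. g v Y = gb (h X Y) \<xi>"
  proof
    fix X
    have hl: "linear (h X)" using hs unfolding sym_bilinear_map_def bilinear_def by auto
    have ll: "linear (\<lambda>Y. gb (h X Y) \<xi>)"
      using linear_compose[OF hl bil_left[OF gbl, of \<xi>]] by (simp add: o_def)
    define u where "u = (\<chi> i. gb (h X (axis i 1)) \<xi>)"
    have lu: "gb (h X Y) \<xi> = Y \<bullet> u" for Y unfolding u_def by (rule riesz1[OF ll])
    obtain v where v: "G v = u" using surj by (metis surjD)
    have "g v Y = gb (h X Y) \<xi>" for Y
    proof -
      have "g v Y = g Y v" using sy by simp
      also have "\<dots> = Y \<bullet> G v" unfolding G_def by (rule riesz2[OF bl])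
      finally show ?thesis using v lu by simp
    qed
    then show "\<exists>v. \<forall>Y. g v Y = gb (h X Y) \<xi>" by blast
  qed
  then show ?thesis by metis
qed

lemma gram_inv:
  fixes g :: "real^'n \<Rightarrow> real^'n \<Rightarrow> real"
  assumes pd: "pos_def_form g"
  shows "matrix_inv (gram g) ** gram g = mat 1"
proof -
  have bl: "bilinear g" using pd unfolding pos_def_form_def by auto
  define G where "G = (\<lambda>y. \<chi> i. g (axis i 1) y)"
  have Glin: "linear G" unfolding G_def by (rule G_linear[OF bl])
  have "inj G" unfolding G_def by (rule G_inj[OF pd_nondeg[OF pd]])
  then have inj0: "\<forall>x. G x = 0 \<longrightarrow> x = 0" using linear_injective_0[OF Glin] by blast
  have eq: "gram g *v x = G x" for x
  proof -
    have "(gram g *v x) $ i = g (axis i 1) x" for i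
    proof -
      have "g (axis i 1) x = x \<bullet> (\<chi> j. g (axis i 1) (axis j 1))"
        by (rule riesz1[OF bil_right[OF bl]])
      then show ?thesis by (simp add: matrix_vector_mult_def gram_def inner_vec_def mult.commute)
    qed
    then show ?thesis by (simp add: vec_eq_iff G_def)
  qed
  then have "\<forall>x. gram g *v x = 0 \<longrightarrow> x = 0" using inj0 by simp
  then obtain B where B: "B ** gram g = mat 1" using matrix_left_invertible_ker by blast
  then have "gram g ** B = mat 1" using matrix_left_right_inverse by blast
  with B have "\<exists>A'. gram g ** A' = mat 1 \<and> A' ** gram g = mat 1" by blast
  then show ?thesis unfolding matrix_inv_def by (rule someI2_ex) blast
qed

lemma mean_umb:
  fixes g :: "real^'n \<Rightarrow> real^'n \<Rightarrow> real" and h :: "real^'n \<Rightarrow> real^'n \<Rightarrow> 'b::real_vector"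
  assumes pd: "pos_def_form g" and gbl: "bilinear gb"
    and c: "\<forall>X Y. gb (h X Y) \<xi> = c * g X Y"
  shows "gb (mean_curv g h) \<xi> = c"
proof -
  have sy: "\<forall>x y. g x y = g y x" using pd unfolding pos_def_form_def by auto
  define M where "M = matrix_inv (gram g)"
  have lin: "linear (\<lambda>z. gb z \<xi>)" by (rule bil_left[OF gbl])
  have "gb (mean_curv g h) \<xi> = (1 / real CARD('n)) *
      (\<Sum>i\<in>UNIV. \<Sum>j\<in>UNIV. M $ i $ j * gb (h (axis i 1) (axis j 1)) \<xi>)"
    unfolding mean_curv_def trace_g_def M_def
    by (simp add: linear_scale[OF lin] linear_sum[OF lin] o_def)
  also have "\<dots> = (1 / real CARD('n)) * c *
      (\<Sum>i\<in>UNIV. \<Sum>j\<in>UNIV. M $ i $ j * gram g $ j $ i)"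
  proof -
    have "gb (h (axis i 1) (axis j 1)) \<xi> = c * gram g $ j $ i" for i j
      using c sy by (simp add: gram_def)
    then show ?thesis by (simp add: sum_distrib_left mult_ac)
  qed
  also have "\<dots> = (1 / real CARD('n)) * c * real CARD('n)"
  proof -
    have "(\<Sum>j\<in>UNIV. M $ i $ j * gram g $ j $ i) = 1" for i
    proof -
      have "(M ** gram g) $ i $ i = 1" using gram_inv[OF pd] by (simp add: M_def mat_def)
      then show ?thesis by (simp add: matrix_matrix_mult_def)
    qed
    then show ?thesis by simp
  qed
  finally show ?thesis by simp
qed

lemma point_eq:
  fixes g :: "real^'n \<Rightarrow> real^'n \<Rightarrow> real" and gb :: "real^'k \<Rightarrow> real^'k \<Rightarrow> real"
    and h :: "real^'n \<Rightarrow> real^'n \<Rightarrow> real^'k"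
  assumes pd: "pos_def_form g" and nd: "nondeg_sym_form gb" and hs: "sym_bilinear_map h"
  shows "umbilical_space g gb h = orth_compl gb (shear_space g h)"
proof -
  have gbl: "bilinear gb" and gsy: "\<forall>x y. gb x y = gb y x" using nd unfolding nondeg_sym_form_def by auto
  have bl: "bilinear g" using pd unfolding pos_def_form_def by auto
  have key: "\<xi> \<in> orth_compl gb (shear_space g h) \<longleftrightarrow>
      (\<forall>X Y. gb (h X Y) \<xi> = gb (mean_curv g h) \<xi> * g X Y)" for \<xi>
  proof -
    have e: "gb \<xi> (shear g h v w) = gb (h v w) \<xi> - gb (mean_curv g h) \<xi> * g v w" for v w
      unfolding shear_def bilinear_rsub[OF gbl] bilinear_rmul[OF gbl]
      using gsy[rule_format, of \<xi> "h v w"] gsy[rule_format, of \<xi> "mean_curv g h"] by simp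
    have "\<xi> \<in> orth_compl gb (shear_space g h) \<longleftrightarrow> (\<forall>v w. gb \<xi> (shear g h v w) = 0)"
      unfolding shear_space_def orth_span[OF gbl] by auto
    also have "\<dots> \<longleftrightarrow> (\<forall>X Y. gb (h X Y) \<xi> = gb (mean_curv g h) \<xi> * g X Y)"
      by (simp add: e)
    finally show ?thesis .
  qed
  show ?thesis
  proof (intro set_eqI iffI)
    fix \<xi> assume "\<xi> \<in> umbilical_space g gb h"
    then obtain c where c: "shape_op g gb h \<xi> = (\<lambda>X. c *\<^sub>R X)" unfolding umbilical_space_def by auto
    obtain A where A: "\<forall>X Y. g (A X) Y = gb (h X Y) \<xi>" using shape_ex[OF pd gbl hs] by blast
    have "shape_op g gb h \<xi> = A" by (rule shape_eq) (fact pd, fact A)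
    then have "A = (\<lambda>X. c *\<^sub>R X)" using c by simp
    then have cc: "\<forall>X Y. gb (h X Y) \<xi> = c * g X Y" using A bilinear_lmul[OF bl] by simp
    then have "gb (mean_curv g h) \<xi> = c" by (rule mean_umb[OF pd gbl])
    then show "\<xi> \<in> orth_compl gb (shear_space g h)" using key cc by simp
  next
    fix \<xi> assume "\<xi> \<in> orth_compl gb (shear_space g h)"
    then have k: "\<forall>X Y. gb (h X Y) \<xi> = gb (mean_curv g h) \<xi> * g X Y" using key by blast
    let ?c = "gb (mean_curv g h) \<xi>"
    have "\<forall>X Y. g (?c *\<^sub>R X) Y = gb (h X Y) \<xi>" using k bilinear_lmul[OF bl] by simp
    then have "shape_op g gb h \<xi> = (\<lambda>X. ?c *\<^sub>R X)" by (rule shape_eq[OF pd])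
    then show "\<xi> \<in> umbilical_space g gb h" unfolding umbilical_space_def by blast
  qed
qed

lemma dim_orth:
  fixes gb :: "real^'k \<Rightarrow> real^'k \<Rightarrow> real"
  assumes nd: "nondeg_sym_form gb" and W: "subspace W"
  shows "dim (orth_compl gb W) + dim W = CARD('k)"
proof -
  have gbl: "bilinear gb" using nd unfolding nondeg_sym_form_def by auto
  define F where "F = (\<lambda>y. \<chi> i. gb (axis i 1) y)"
  have Flin: "linear F" unfolding F_def by (rule G_linear[OF gbl])
  have Finj: "inj F" unfolding F_def by (rule G_inj[OF nd])
  have r: "gb \<xi> \<eta> = F \<eta> \<bullet> \<xi>" for \<xi> \<eta>
    by (subst riesz2[OF gbl]) (simp add: F_def inner_commute)
  have oc: "orth_compl gb W = {y \<in> UNIV. \<forall>x \<in> F ` W. orthogonal x y}"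
    by (auto simp: orth_compl_def orthogonal_def r)
  have sF: "subspace (F ` W)" by (rule linear_subspace_image[OF Flin W])
  have "dim {y \<in> UNIV. \<forall>x \<in> F ` W. orthogonal x y} + dim (F ` W) = dim (UNIV :: (real^'k) set)"
    by (rule dim_subspace_orthogonal_to_vectors[OF sF subspace_UNIV]) simp
  moreover have "dim (F ` W) = dim W"
    by (rule dim_image_eq[OF Flin]) (use Finj in \<open>auto intro: inj_on_subset\<close>)
  ultimately show ?thesis using oc by simp
qed

theorem corollary3p3:
  fixes S :: "'p set"
    and g :: "'p \<Rightarrow> real^'n \<Rightarrow> real^'n \<Rightarrow> real"
    and gb :: "'p \<Rightarrow> real^'k \<Rightarrow> real^'k \<Rightarrow> real"
    and h :: "'p \<Rightarrow> real^'n \<Rightarrow> real^'n \<Rightarrow> real^'k"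
  assumes g_pd: "\<forall>p\<in>S. pos_def_form (g p)"
    and gb_nd: "\<forall>p\<in>S. nondeg_sym_form (gb p)"
    and h_sym: "\<forall>p\<in>S. sym_bilinear_map (h p)"
    and const_dim: "\<exists>d. \<forall>p\<in>S. dim (shear_space (g p) (h p)) = d"
  shows "(\<exists>d. \<forall>p\<in>S. dim (umbilical_space (g p) (gb p) (h p)) = d)
    \<and> umbilical_fields S g gb h = shear_perp_fields S g gb h
    \<and> (\<forall>p\<in>S. umbilical_space (g p) (gb p) (h p) = orth_compl (gb p) (shear_space (g p) (h p))
          \<and> CARD('k) - dim (umbilical_space (g p) (gb p) (h p)) = dim (shear_space (g p) (h p)))"
proof -
  have U: "\<forall>p\<in>S. umbilical_space (g p) (gb p) (h p) = orth_compl (gb p) (shear_space (g p) (h p))"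
    using point_eq g_pd gb_nd h_sym by blast
  have D: "dim (umbilical_space (g p) (gb p) (h p)) + dim (shear_space (g p) (h p)) = CARD('k)"
    if "p \<in> S" for p
    using U that dim_orth[OF bspec[OF gb_nd that], of "shear_space (g p) (h p)"]
    by (simp add: shear_space_def)
  obtain d where d: "\<forall>p\<in>S. dim (shear_space (g p) (h p)) = d" using const_dim by blast
  have 1: "\<exists>d. \<forall>p\<in>S. dim (umbilical_space (g p) (gb p) (h p)) = d"
  proof (intro exI ballI)
    fix p assume p: "p \<in> S"
    show "dim (umbilical_space (g p) (gb p) (h p)) = CARD('k) - d"
      using D[OF p] d p by force
  qed
  have 2: "umbilical_fields S g gb h = shear_perp_fields S g gb h"
    unfolding umbilical_fields_def shear_perp_fields_def using U by auto
  have 3: "\<forall>p\<in>S. CARD('k) - dim (umbilical_space (g p) (gb p) (h p)) = dim (shear_space (g p) (h p))"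
  proof
    fix p assume p: "p \<in> S"
    show "CARD('k) - dim (umbilical_space (g p) (gb p) (h p)) = dim (shear_space (g p) (h p))"
      using D[OF p] by linarith
  qed
  show ?thesis using 1 2 3 U by blast
qed

end
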